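(* Let $m\ge1$ and for $p_1,\dots,p_m\ge0$ let $K_{p_1,\dots,p_m}$ be the complete $m$-partite graph whose vertex set is a disjoint union of parts of sizes $p_1,\dots,p_m$, with two vertices adjacent if and only if they lie in different parts. Then $$\sum_{p_1,\dots,p_m\ge0}\mathrm{sa}(K_{p_1,\dots,p_m})\,\frac{x_1^{p_1}}{p_1!}\cdots\frac{x_m^{p_m}}{p_m!} = \frac{(1-m)+\cosh x_1+\cdots+\cosh x_m}{\cosh(x_1+\cdots+x_m)}.$$
   Context: All graphs are finite, simple and undirected. For a graph $G=(V,E)$ and $V'\subseteq V$, $G|_{V'}$ denotes the induced subgraph on $V'$. The signed a-number $\mathrm{sa}(G)$ is defined recursively: $\mathrm{sa}(G)=1$ if $G$ is the empty graph (no vertices); $\mathrm{sa}(G)=0$ if $G$ has a connected component with an odd number of vertices; otherwise $\mathrm{sa}(G)=-\sum_{V'\subsetneq V}\mathrm{sa}(G|_{V'})$. *)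

theory Defs
  imports "HOL-Analysis.Analysis"
begin

text \<open>A finite simple graph is given by a vertex set V and a (symmetric, irreflexive)
adjacency relation E.  The induced subgraph on V' \<subseteq> V is represented by (E, V'):
all notions below only use edges between vertices of the given vertex set.\<close>

definition adj_in :: "('a \<Rightarrow> 'a \<Rightarrow> bool) \<Rightarrow> 'a set \<Rightarrow> 'a \<Rightarrow> 'a \<Rightarrow> bool" where
  "adj_in E V x y \<longleftrightarrow> x \<in> V \<and> y \<in> V \<and> E x y"

definition component :: "('a \<Rightarrow> 'a \<Rightarrow> bool) \<Rightarrow> 'a set \<Rightarrow> 'a \<Rightarrow> 'a set" where
  "component E V v = {u \<in> V. (adj_in E V)\<^sup>*\<^sup>* v u}"

definition has_odd_component :: "('a \<Rightarrow> 'a \<Rightarrow> bool) \<Rightarrow> 'a set \<Rightarrow> bool" where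
  "has_odd_component E V \<longleftrightarrow> (\<exists>v\<in>V. odd (card (component E V v)))"

text \<open>Signed a-number; the value on infinite vertex sets is irrelevant (set to 0).\<close>
function sa :: "('a \<Rightarrow> 'a \<Rightarrow> bool) \<Rightarrow> 'a set \<Rightarrow> int" where
  "sa E V = (if \<not> finite V then 0
             else if V = {} then 1
             else if has_odd_component E V then 0
             else - (\<Sum>V'\<in>{V'. V' \<subset> V}. sa E V'))"
  by pat_completeness auto
termination
  by (relation "Wellfounded.measure (\<lambda>(E, V). card V)") (auto intro: psubset_card_mono)

text \<open>Complete m-partite graph K_{p_0,...,p_{m-1}}: vertex (i, j) is the j-th vertex of part i.\<close>
definition multipartite_verts :: "nat \<Rightarrow> (nat \<Rightarrow> nat) \<Rightarrow> (nat \<times> nat) set" where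
  "multipartite_verts m p = {(i, j). i < m \<and> j < p i}"

definition multipartite_adj :: "nat \<times> nat \<Rightarrow> nat \<times> nat \<Rightarrow> bool" where
  "multipartite_adj a b \<longleftrightarrow> fst a \<noteq> fst b"

end

theory Submission
  imports Defs
begin

lemma rt_map:
  assumes "(adj_in E V)\<^sup>*\<^sup>* v u" "v \<in> V" "f ` V \<subseteq> W"
    "\<forall>x\<in>V. \<forall>y\<in>V. E x y \<longrightarrow> E' (f x) (f y)"
  shows "(adj_in E' W)\<^sup>*\<^sup>* (f v) (f u)"
  using assms(1)
proof (induction rule: rtranclp_induct)
  case base then show ?case by simp
next
  case (step y z)
  then have "adj_in E' W (f y) (f z)" using assms(3,4) by (auto simp: adj_in_def)
  then show ?case using step.IH by (meson rtranclp.rtrancl_into_rtrancl)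
qed

lemma comp_sub: "component E V v \<subseteq> V" by (auto simp: component_def)

lemma component_map:
  assumes "bij_betw f V W" "\<forall>x\<in>V. \<forall>y\<in>V. E (f x) (f y) = E x y" "v \<in> V"
  shows "component E W (f v) = f ` component E V v"
proof -
  let ?g = "inv_into V f"
  have g: "bij_betw ?g W V" using assms(1) by (rule bij_betw_inv_into)
  have gf: "\<And>x. x \<in> V \<Longrightarrow> ?g (f x) = x" using assms(1) by (simp add: bij_betw_inv_into_left)
  have fg: "\<And>y. y \<in> W \<Longrightarrow> f (?g y) = y" using assms(1) by (simp add: bij_betw_inv_into_right)
  have fV: "f ` V \<subseteq> W" "?g ` W \<subseteq> V" using assms(1) g by (auto simp: bij_betw_def)
  have Eg: "\<forall>x\<in>W. \<forall>y\<in>W. E x y \<longrightarrow> E (?g x) (?g y)"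
  proof (intro ballI impI)
    fix x y assume xy: "x \<in> W" "y \<in> W" "E x y"
    have "?g x \<in> V" "?g y \<in> V" using xy fV by auto
    then show "E (?g x) (?g y)" using assms(2) xy fg by metis
  qed
  have fvW: "f v \<in> W" using assms(3) fV by auto
  show ?thesis
  proof (rule set_eqI, rule iffI)
    fix u assume "u \<in> component E W (f v)"
    then have u: "u \<in> W" "(adj_in E W)\<^sup>*\<^sup>* (f v) u" by (auto simp: component_def)
    have "(adj_in E V)\<^sup>*\<^sup>* (?g (f v)) (?g u)"
      by (rule rt_map[OF u(2) fvW fV(2) Eg])
    then have "?g u \<in> component E V v" using gf[OF assms(3)] u fV by (auto simp: component_def)
    then show "u \<in> f ` component E V v" using fg[OF u(1)] by (metis image_eqI)
  next
    fix u assume "u \<in> f ` component E V v"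
    then obtain w where w: "w \<in> V" "(adj_in E V)\<^sup>*\<^sup>* v w" "u = f w" by (auto simp: component_def)
    have "(adj_in E W)\<^sup>*\<^sup>* (f v) (f w)"
      by (rule rt_map[OF w(2) assms(3) fV(1)]) (use assms(2) in auto)
    then show "u \<in> component E W (f v)" using w fV by (auto simp: component_def)
  qed
qed

lemma odd_comp_iso:
  assumes "bij_betw f V W" "\<forall>x\<in>V. \<forall>y\<in>V. E (f x) (f y) = E x y"
  shows "has_odd_component E V = has_odd_component E W"
proof
  assume "has_odd_component E V"
  then obtain v where v: "v \<in> V" "odd (card (component E V v))" by (auto simp: has_odd_component_def)
  have "card (component E W (f v)) = card (component E V v)"
    unfolding component_map[OF assms v(1)]
    by (rule card_image, rule inj_on_subset[OF _ comp_sub]) (use assms(1) in \<open>auto simp: bij_betw_def\<close>)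
  then show "has_odd_component E W" using v assms(1) unfolding has_odd_component_def
    by (metis bij_betwE)
next
  assume "has_odd_component E W"
  then obtain w where w: "w \<in> W" "odd (card (component E W w))" by (auto simp: has_odd_component_def)
  obtain v where v: "v \<in> V" "w = f v" using assms(1) w(1) by (auto simp: bij_betw_def)
  have "card (component E W (f v)) = card (component E V v)"
    unfolding component_map[OF assms v(1)]
    by (rule card_image, rule inj_on_subset[OF _ comp_sub]) (use assms(1) in \<open>auto simp: bij_betw_def\<close>)
  then show "has_odd_component E V" using v w unfolding has_odd_component_def by metis
qed

lemma sa_iso:
  assumes "bij_betw f V W" "\<forall>x\<in>V. \<forall>y\<in>V. E (f x) (f y) = E x y"
  shows "sa E V = sa E W"
  using assms
proof (induction "card V" arbitrary: V W rule: less_induct)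
  case less
  show ?case
  proof (cases "finite V")
    case False
    then have "\<not> finite W" using less.prems(1) bij_betw_finite by blast
    then show ?thesis using False by simp
  next
    case fin: True
    then have finW: "finite W" using less.prems(1) bij_betw_finite by blast
    have fVW: "f ` V = W" using less.prems(1) by (simp add: bij_betw_def)
    have bP: "bij_betw (image f) (Pow V) (Pow W)" by (rule bij_betw_image_Pow[OF less.prems(1)])
    have b1: "bij_betw (image f) {V} {W}" using fVW by (simp add: bij_betw_def)
    have bPm: "bij_betw (image f) (Pow V - {V}) (Pow W - {W})"
      by (rule bij_betw_DiffI[OF bP b1]) auto
    have eqV: "{V'. V' \<subset> V} = Pow V - {V}" by auto
    have eqW: "{W'. W' \<subset> W} = Pow W - {W}" by auto
    have sums: "(\<Sum>V'\<in>{V'. V' \<subset> V}. sa E V') = (\<Sum>W'\<in>{W'. W' \<subset> W}. sa E W')"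
      unfolding eqV eqW
    proof -
      have r: "(\<Sum>V'\<in>Pow V - {V}. sa E (f ` V')) = sum (sa E) (Pow W - {W})"
        by (rule sum.reindex_bij_betw[OF bPm])
      have "sa E (f ` V') = sa E V'" if V': "V' \<in> Pow V - {V}" for V'
      proof -
      from V' have "V' \<subset> V" by auto
      then have "card V' < card V" using fin by (simp add: psubset_card_mono)
      moreover have "bij_betw f V' (f ` V')"
        using V' less.prems(1) by (auto simp: bij_betw_def intro: inj_on_subset)
      moreover have "\<forall>x\<in>V'. \<forall>y\<in>V'. E (f x) (f y) = E x y" using V' less.prems(2) by auto
      ultimately show "sa E (f ` V') = sa E V'" using less.hyps by (metis)
      qed
      then show "sum (sa E) (Pow V - {V}) = sum (sa E) (Pow W - {W})" using r by simp
    qed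
    have emp: "V = {} \<longleftrightarrow> W = {}" using fVW by auto
    have odd: "has_odd_component E V = has_odd_component E W"
      by (rule odd_comp_iso[OF less.prems])
    show ?thesis
      apply (subst (1 2) sa.simps)
      using fin finW emp odd sums by simp
  qed
qed

definition cnt :: "(nat \<times> nat) set \<Rightarrow> nat \<Rightarrow> nat" where
  "cnt S i = card {j. (i, j) \<in> S}"

definition av :: "nat \<Rightarrow> (nat \<Rightarrow> nat) \<Rightarrow> int" where
  "av m p = sa multipartite_adj (multipartite_verts m p)"

definition ext0 :: "nat \<Rightarrow> (nat \<Rightarrow> 'b) \<Rightarrow> nat \<Rightarrow> 'b::zero" where
  "ext0 m u = (\<lambda>i. if i < m then u i else 0)"

lemma bij_ext0:
  "bij_betw (ext0 m) (PiE {..<m} B) {p. (\<forall>i<m. p i \<in> B i) \<and> (\<forall>i\<ge>m. p i = 0)}"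
proof (rule bij_betw_byWitness[where f'="\<lambda>p. restrict p {..<m}"])
  show "\<forall>a\<in>PiE {..<m} B. restrict (ext0 m a) {..<m} = a"
    by (auto simp: ext0_def PiE_def extensional_def fun_eq_iff)
  show "\<forall>a'\<in>{p. (\<forall>i<m. p i \<in> B i) \<and> (\<forall>i\<ge>m. p i = 0)}. ext0 m (restrict a' {..<m}) = a'"
    by (auto simp: ext0_def fun_eq_iff)
  show "ext0 m ` PiE {..<m} B \<subseteq> {p. (\<forall>i<m. p i \<in> B i) \<and> (\<forall>i\<ge>m. p i = 0)}"
    by (auto simp: ext0_def PiE_def)
  show "(\<lambda>p. restrict p {..<m}) ` {p. (\<forall>i<m. p i \<in> B i) \<and> (\<forall>i\<ge>m. p i = 0)} \<subseteq> PiE {..<m} B"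
    by (intro image_subsetI, subst restrict_PiE_iff) auto
qed

lemma slice_finite: "finite S \<Longrightarrow> finite {j. (i, j) \<in> S}"
proof -
  assume "finite S"
  moreover have "{j. (i, j) \<in> S} \<subseteq> snd ` S" by force
  ultimately show ?thesis by (meson finite_surj)
qed

lemma sa_cnt:
  assumes "finite S" "\<forall>x\<in>S. fst x < m"
  shows "sa multipartite_adj S = av m (cnt S)"
proof -
  define Sl where "Sl i = {j. (i, j) \<in> S}" for i
  have fin: "finite (Sl i)" for i using slice_finite[OF assms(1)] by (simp add: Sl_def)
  have "\<forall>i. \<exists>h. bij_betw h (Sl i) {0..<card (Sl i)}"
    using fin ex_bij_betw_finite_nat by blast
  then obtain h where h: "\<And>i. bij_betw (h i) (Sl i) {0..<card (Sl i)}" by metis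
  define f where "f x = (fst x, h (fst x) (snd x))" for x
  have cntS: "cnt S i = card (Sl i)" for i by (simp add: cnt_def Sl_def)
  have "bij_betw f S (multipartite_verts m (cnt S))"
  proof (rule bij_betw_imageI)
    show "inj_on f S"
    proof (rule inj_onI)
      fix x y assume xy: "x \<in> S" "y \<in> S" "f x = f y"
      obtain i j i' j' where x: "x = (i, j)" and y: "y = (i', j')" by fastforce
      have ii: "i = i'" using xy(3) by (simp add: f_def x y)
      have "h i j = h i j'" using xy(3) by (simp add: f_def x y ii)
      moreover have "j \<in> Sl i" "j' \<in> Sl i" using xy x y ii by (auto simp: Sl_def)
      ultimately have "j = j'" using h[of i] by (auto simp: bij_betw_def inj_on_def)
      then show "x = y" using x y ii by simp
    qed
    show "f ` S = multipartite_verts m (cnt S)"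
    proof (rule set_eqI, rule iffI)
      fix z assume "z \<in> f ` S"
      then obtain i j where ij: "(i, j) \<in> S" "z = (i, h i j)" by (auto simp: f_def)
      have "j \<in> Sl i" using ij by (simp add: Sl_def)
      then have "h i j < card (Sl i)" using h[of i] by (auto simp: bij_betw_def)
      moreover have "i < m" using assms(2) ij by force
      ultimately show "z \<in> multipartite_verts m (cnt S)" using ij by (simp add: multipartite_verts_def cntS)
    next
      fix z assume "z \<in> multipartite_verts m (cnt S)"
      then obtain i k where z: "z = (i, k)" "i < m" "k < card (Sl i)"
        by (auto simp: multipartite_verts_def cntS)
      then have "k \<in> h i ` Sl i" using h[of i] by (auto simp: bij_betw_def)
      then obtain j where "j \<in> Sl i" "k = h i j" by auto
      then show "z \<in> f ` S" using z by (auto simp: f_def Sl_def image_iff intro!: bexI[of _ "(i,j)"])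
    qed
  qed
  moreover have "\<forall>x\<in>S. \<forall>y\<in>S. multipartite_adj (f x) (f y) = multipartite_adj x y"
    by (simp add: f_def multipartite_adj_def)
  ultimately show ?thesis unfolding av_def by (rule sa_iso)
qed

definition PP :: "nat \<Rightarrow> (nat \<Rightarrow> nat) set" where
  "PP m = {p. \<forall>i\<ge>m. p i = 0}"

definition box :: "(nat \<Rightarrow> nat) \<Rightarrow> (nat \<Rightarrow> nat) set" where
  "box r = {p. \<forall>i. p i \<le> r i}"

definition Bc :: "nat \<Rightarrow> (nat \<Rightarrow> nat) \<Rightarrow> (nat \<Rightarrow> nat) \<Rightarrow> nat" where
  "Bc m r p = (\<Prod>i<m. r i choose p i)"

lemma verts_Sigma: "multipartite_verts m r = Sigma {..<m} (\<lambda>i. {..<r i})"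
  by (auto simp: multipartite_verts_def)

lemma finite_verts: "finite (multipartite_verts m r)"
  by (simp add: verts_Sigma)

lemma box_eq: assumes "r \<in> PP m" shows "box r = {p. (\<forall>i<m. p i \<in> {..r i}) \<and> (\<forall>i\<ge>m. p i = 0)}"
proof (rule set_eqI, rule iffI)
  have r0: "\<And>i. i \<ge> m \<Longrightarrow> r i = 0" using assms by (simp add: PP_def)
  fix p
  { assume "p \<in> box r"
    then have pr: "p i \<le> r i" for i by (simp add: box_def)
    have "\<forall>i\<ge>m. p i = 0"
    proof (intro allI impI)
      fix i assume "m \<le> i" then have "r i = 0" by (rule r0)
      with pr[of i] show "p i = 0" by simp
    qed
    then show "p \<in> {p. (\<forall>i<m. p i \<in> {..r i}) \<and> (\<forall>i\<ge>m. p i = 0)}" using pr by simp }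
  { assume p: "p \<in> {p. (\<forall>i<m. p i \<in> {..r i}) \<and> (\<forall>i\<ge>m. p i = 0)}"
    have "p i \<le> r i" for i using p by (cases "i < m") auto
    then show "p \<in> box r" by (simp add: box_def) }
qed

lemma finite_box: "r \<in> PP m \<Longrightarrow> finite (box r)"
proof -
  assume r: "r \<in> PP m"
  have "box r = ext0 m ` PiE {..<m} (\<lambda>i. {..r i})"
    using bij_ext0[of m "\<lambda>i. {..r i}"] unfolding box_eq[OF r] by (simp add: bij_betw_def)
  then show ?thesis by (simp add: finite_PiE)
qed

lemma box_PP: "r \<in> PP m \<Longrightarrow> p \<in> box r \<Longrightarrow> p \<in> PP m"
  by (auto simp: box_def PP_def) (metis le_zero_eq)

lemma cnt_in_box:
  assumes "V' \<subseteq> multipartite_verts m r"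
  shows "cnt V' \<in> box r"
proof -
  have "cnt V' i \<le> r i" for i
  proof -
    have "{j. (i, j) \<in> V'} \<subseteq> {..<r i}" using assms by (auto simp: multipartite_verts_def)
    then have "card {j. (i, j) \<in> V'} \<le> card {..<r i}" by (rule card_mono[rotated]) simp
    then show ?thesis by (simp add: cnt_def)
  qed
  then show ?thesis by (simp add: box_def)
qed

lemma card_fiber:
  assumes r: "r \<in> PP m" and p: "p \<in> box r"
  shows "card {V'\<in>Pow (multipartite_verts m r). cnt V' = p} = Bc m r p"
proof -
  define T where "T = PiE {..<m} (\<lambda>i. {A. A \<subseteq> {..<r i} \<and> card A = p i})"
  define F where "F = {V'\<in>Pow (multipartite_verts m r). cnt V' = p}"
  have pz: "\<And>i. i \<ge> m \<Longrightarrow> p i = 0" using box_PP[OF r p] by (simp add: PP_def)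
  have "bij_betw (\<lambda>V'. restrict (\<lambda>i. {j. (i, j) \<in> V'}) {..<m}) F T"
  proof (rule bij_betw_byWitness[where f'="\<lambda>U. {(i, j). i < m \<and> j \<in> U i}"])
    show "\<forall>a\<in>F. {(i, j). i < m \<and> j \<in> restrict (\<lambda>i. {j. (i, j) \<in> a}) {..<m} i} = a"
      by (auto simp: F_def multipartite_verts_def)
    show "\<forall>a'\<in>T. restrict (\<lambda>i. {j. (i, j) \<in> {(i, j). i < m \<and> j \<in> a' i}}) {..<m} = a'"
      by (auto simp: T_def PiE_def extensional_def fun_eq_iff)
    show "(\<lambda>V'. restrict (\<lambda>i. {j. (i, j) \<in> V'}) {..<m}) ` F \<subseteq> T"
    proof (rule image_subsetI)
      fix V' assume "V' \<in> F"
      then have V': "V' \<subseteq> multipartite_verts m r" "cnt V' = p" by (auto simp: F_def)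
      show "restrict (\<lambda>i. {j. (i, j) \<in> V'}) {..<m} \<in> T"
        unfolding T_def
      proof (subst restrict_PiE_iff, intro ballI CollectI conjI)
        fix i assume "i \<in> {..<m}"
        show "{j. (i, j) \<in> V'} \<subseteq> {..<r i}" using V'(1) by (auto simp: multipartite_verts_def)
        show "card {j. (i, j) \<in> V'} = p i" using V'(2) by (auto simp: cnt_def)
      qed
    qed
    show "(\<lambda>U. {(i, j). i < m \<and> j \<in> U i}) ` T \<subseteq> F"
    proof (rule image_subsetI)
      fix U assume U: "U \<in> T"
      have sub: "{(i, j). i < m \<and> j \<in> U i} \<subseteq> multipartite_verts m r"
        using U by (force simp: T_def multipartite_verts_def PiE_def Pi_def)
      have "cnt {(i, j). i < m \<and> j \<in> U i} i = p i" for i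
      proof (cases "i < m")
        case True
        then show ?thesis using U by (auto simp: T_def cnt_def PiE_def Pi_def)
      next
        case False
        then show ?thesis using pz[of i] by (simp add: cnt_def)
      qed
      then show "{(i, j). i < m \<and> j \<in> U i} \<in> F" using sub by (auto simp: F_def)
    qed
  qed
  then have "card F = card T" by (rule bij_betw_same_card)
  also have "card T = (\<Prod>i<m. card {A. A \<subseteq> {..<r i} \<and> card A = p i})"
    unfolding T_def by (simp add: card_PiE)
  also have "\<dots> = Bc m r p" unfolding Bc_def
    by (rule prod.cong[OF refl]) (simp add: n_subsets)
  finally show ?thesis by (simp add: F_def)
qed

lemma sum_group_cnt:
  fixes g :: "(nat \<Rightarrow> nat) \<Rightarrow> 'a::comm_ring_1"
  assumes r: "r \<in> PP m"
  shows "(\<Sum>V'\<in>Pow (multipartite_verts m r). g (cnt V')) = (\<Sum>p\<in>box r. of_nat (Bc m r p) * g p)"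
proof -
  have "(\<Sum>V'\<in>Pow (multipartite_verts m r). g (cnt V')) =
        (\<Sum>p\<in>box r. \<Sum>V'\<in>{V'\<in>Pow (multipartite_verts m r). cnt V' = p}. g (cnt V'))"
    by (rule sum.group[symmetric]) (auto simp: finite_box[OF r] finite_verts intro: cnt_in_box)
  also have "\<dots> = (\<Sum>p\<in>box r. of_nat (Bc m r p) * g p)"
  proof (rule sum.cong[OF refl])
    fix p assume p: "p \<in> box r"
    have "(\<Sum>V'\<in>{V'\<in>Pow (multipartite_verts m r). cnt V' = p}. g (cnt V')) =
          (\<Sum>V'\<in>{V'\<in>Pow (multipartite_verts m r). cnt V' = p}. g p)" by simp
    also have "\<dots> = of_nat (Bc m r p) * g p" using card_fiber[OF r p] by simp
    finally show "(\<Sum>V'\<in>{V'\<in>Pow (multipartite_verts m r). cnt V' = p}. g (cnt V')) = of_nat (Bc m r p) * g p" .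
  qed
  finally show ?thesis .
qed

definition tot :: "nat \<Rightarrow> (nat \<Rightarrow> nat) \<Rightarrow> nat" where
  "tot m r = (\<Sum>i<m. r i)"

definition tp :: "nat \<Rightarrow> (nat \<Rightarrow> nat) \<Rightarrow> bool" where
  "tp m r \<longleftrightarrow> (\<exists>i<m. \<exists>k<m. i \<noteq> k \<and> 0 < r i \<and> 0 < r k)"

definition nz :: "nat \<Rightarrow> (nat \<Rightarrow> nat) \<Rightarrow> bool" where
  "nz m r \<longleftrightarrow> (\<exists>i<m. 0 < r i)"

lemma card_verts: "card (multipartite_verts m r) = tot m r"
  unfolding verts_Sigma tot_def by (subst card_SigmaI) auto

lemma comp_tp:
  assumes "tp m r" "v \<in> multipartite_verts m r"
  shows "component multipartite_adj (multipartite_verts m r) v = multipartite_verts m r"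
proof -
  let ?V = "multipartite_verts m r"
  have "(adj_in multipartite_adj ?V)\<^sup>*\<^sup>* v u" if u: "u \<in> ?V" for u
  proof (cases "fst v = fst u")
    case False
    then have "adj_in multipartite_adj ?V v u" using assms(2) u by (simp add: adj_in_def multipartite_adj_def)
    then show ?thesis by simp
  next
    case True
    obtain k where k: "k < m" "k \<noteq> fst v" "0 < r k" using assms(1) unfolding tp_def by metis
    have w: "(k, 0) \<in> ?V" using k by (simp add: multipartite_verts_def)
    have "adj_in multipartite_adj ?V v (k, 0)" using w assms(2) k by (simp add: adj_in_def multipartite_adj_def)
    moreover have "adj_in multipartite_adj ?V (k, 0) u" using w u k True by (simp add: adj_in_def multipartite_adj_def)
    ultimately show ?thesis by (meson rtranclp.rtrancl_into_rtrancl r_into_rtranclp)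
  qed
  then show ?thesis by (auto simp: component_def)
qed

lemma comp_single:
  assumes "\<not> tp m r" "v \<in> multipartite_verts m r"
  shows "component multipartite_adj (multipartite_verts m r) v = {v}"
proof -
  let ?V = "multipartite_verts m r"
  have noadj: "\<not> adj_in multipartite_adj ?V v y" for y
  proof
    assume a: "adj_in multipartite_adj ?V v y"
    then have "y \<in> ?V" "fst v \<noteq> fst y" by (auto simp: adj_in_def multipartite_adj_def)
    then show False using assms unfolding tp_def multipartite_verts_def by auto (metis less_nat_zero_code)
  qed
  have "u = v" if "(adj_in multipartite_adj ?V)\<^sup>*\<^sup>* v u" for u
    using that by (rule converse_rtranclpE) (use noadj in auto)
  then show ?thesis using assms(2) by (auto simp: component_def)
qed

lemma av_zero: "(\<forall>i<m. r i = 0) \<Longrightarrow> av m r = 1"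
proof -
  assume "\<forall>i<m. r i = 0"
  then have "multipartite_verts m r = {}" by (auto simp: multipartite_verts_def)
  then show ?thesis by (simp add: av_def)
qed

lemma verts_ne: "nz m r \<Longrightarrow> multipartite_verts m r \<noteq> {}"
  by (auto simp: nz_def multipartite_verts_def)

lemma av_single: "nz m r \<Longrightarrow> \<not> tp m r \<Longrightarrow> av m r = 0"
proof -
  assume a: "nz m r" "\<not> tp m r"
  obtain v where v: "v \<in> multipartite_verts m r" using verts_ne[OF a(1)] by auto
  have "has_odd_component multipartite_adj (multipartite_verts m r)"
    unfolding has_odd_component_def using v comp_single[OF a(2) v] by (intro bexI[of _ v]) simp_all
  then show ?thesis unfolding av_def using verts_ne[OF a(1)] finite_verts by simp
qed

lemma av_odd: "nz m r \<Longrightarrow> odd (tot m r) \<Longrightarrow> av m r = 0"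
proof -
  assume a: "nz m r" "odd (tot m r)"
  show ?thesis
  proof (cases "tp m r")
    case False then show ?thesis using av_single a by blast
  next
    case True
    obtain v where v: "v \<in> multipartite_verts m r" using verts_ne[OF a(1)] by auto
    have "has_odd_component multipartite_adj (multipartite_verts m r)"
      unfolding has_odd_component_def using v comp_tp[OF True v] a(2) card_verts by metis
    then show ?thesis unfolding av_def using verts_ne[OF a(1)] finite_verts by simp
  qed
qed

lemma av_rec:
  assumes r: "r \<in> PP m" and t: "tp m r" and e: "even (tot m r)"
  shows "(\<Sum>p\<in>box r. of_nat (Bc m r p) * av m p) = 0"
proof -
  let ?V = "multipartite_verts m r"
  have nzr: "nz m r" using t by (auto simp: tp_def nz_def)
  have "\<not> has_odd_component multipartite_adj ?V"
    unfolding has_odd_component_def using comp_tp[OF t] e card_verts by auto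
  then have sa: "sa multipartite_adj ?V = - (\<Sum>V'\<in>{V'. V' \<subset> ?V}. sa multipartite_adj V')"
    using verts_ne[OF nzr] finite_verts by simp
  have pw: "Pow ?V = insert ?V {V'. V' \<subset> ?V}" by auto
  have "(\<Sum>V'\<in>Pow ?V. sa multipartite_adj V') = 0"
  proof -
    have fin: "finite {V'. V' \<subset> ?V}" by (rule finite_subset[of _ "Pow ?V"]) (auto simp: finite_verts)
    have "?V \<notin> {V'. V' \<subset> ?V}" by simp
    then show ?thesis unfolding pw using sum.insert[OF fin, of ?V "sa multipartite_adj"] sa by (simp del: sa.simps)
  qed
  moreover have "(\<Sum>V'\<in>Pow ?V. sa multipartite_adj V') = (\<Sum>V'\<in>Pow ?V. av m (cnt V'))"
  proof (rule sum.cong[OF refl])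
    fix V' assume "V' \<in> Pow ?V"
    then have "finite V'" "\<forall>x\<in>V'. fst x < m" using finite_verts
      by (auto simp: multipartite_verts_def intro: finite_subset)
    then show "sa multipartite_adj V' = av m (cnt V')" by (rule sa_cnt)
  qed
  ultimately show ?thesis using sum_group_cnt[OF r, of "av m"] by simp
qed

lemma box_sub: "p \<in> box r \<Longrightarrow> (\<lambda>i. r i - p i) \<in> box r"
  by (simp add: box_def)

lemma tot_sub: "p \<in> box r \<Longrightarrow> tot m (\<lambda>i. r i - p i) = tot m r - tot m p"
  unfolding tot_def by (rule sum_subtractf_nat) (simp add: box_def)

lemma tot_le: "p \<in> box r \<Longrightarrow> tot m p \<le> tot m r"
  unfolding tot_def by (rule sum_mono) (simp add: box_def)

lemma tot_less:
  assumes r: "r \<in> PP m" and p: "p \<in> box r" and ne: "p \<noteq> r"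
  shows "tot m p < tot m r"
proof -
  have pP: "p \<in> PP m" by (rule box_PP[OF r p])
  obtain i where i: "p i \<noteq> r i" using ne by auto
  have "i < m"
  proof (rule ccontr)
    assume "\<not> i < m"
    then have "p i = 0" "r i = 0" using r pP by (auto simp: PP_def)
    then show False using i by simp
  qed
  moreover have "p i < r i" using i p by (auto simp: box_def le_neq_implies_less)
  ultimately show ?thesis unfolding tot_def
    by (intro sum_strict_mono_ex1) (use p in \<open>auto simp: box_def\<close>)
qed

lemma zero_in_box: "(\<lambda>_. 0) \<in> box r"
  by (simp add: box_def)

lemma tp_box: assumes p: "p \<in> box r" and t: "\<not> tp m r" shows "\<not> tp m p"
proof
  assume "tp m p"
  then obtain i k where ik: "i < m" "k < m" "i \<noteq> k" "0 < p i" "0 < p k" by (auto simp: tp_def)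
  have "p i \<le> r i" "p k \<le> r k" using p by (auto simp: box_def)
  then have "0 < r i" "0 < r k" using ik by auto
  then show False using t ik unfolding tp_def by blast
qed

lemma notnz_PP: assumes "p \<in> PP m" "\<not> nz m p" shows "p = (\<lambda>_. 0)"
proof (rule ext)
  fix i show "p i = 0"
  proof (cases "i < m")
    case True then show ?thesis using assms(2) by (auto simp: nz_def)
  next
    case False then show ?thesis using assms(1) by (simp add: PP_def)
  qed
qed

lemma Bc_zero: "Bc m r (\<lambda>_. 0) = 1"
  by (simp add: Bc_def)

lemma av_even: "av m p \<noteq> 0 \<Longrightarrow> even (tot m p)"
proof (rule ccontr)
  assume a: "av m p \<noteq> 0" "odd (tot m p)"
  have "nz m p"
  proof (rule ccontr)
    assume "\<not> nz m p"
    then have "\<forall>i\<in>{..<m}. p i = 0" by (auto simp: nz_def)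
    then have "tot m p = 0" by (simp add: tot_def)
    then show False using a by simp
  qed
  then show False using av_odd a by blast
qed

definition ar :: "nat \<Rightarrow> (nat \<Rightarrow> nat) \<Rightarrow> real" where
  "ar m p = real_of_int (av m p)"

definition cc :: "nat \<Rightarrow> (nat \<Rightarrow> nat) \<Rightarrow> real" where
  "cc m q = (if even (tot m q) then 1 else 0)"

definition Dc :: "nat \<Rightarrow> (nat \<Rightarrow> nat) \<Rightarrow> real" where
  "Dc m r = (if \<not> nz m r then 1 else if \<not> tp m r \<and> even (tot m r) then 1 else 0)"

lemma S_single:
  assumes r: "r \<in> PP m" and t: "\<not> tp m r"
  shows "(\<Sum>p\<in>box r. real (Bc m r p) * ar m p) = 1"
proof -
  have "(\<Sum>p\<in>box r. real (Bc m r p) * ar m p) = (\<Sum>p\<in>box r. if p = (\<lambda>_. 0) then 1 else 0)"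
  proof (rule sum.cong[OF refl])
    fix p assume p: "p \<in> box r"
    show "real (Bc m r p) * ar m p = (if p = (\<lambda>_. 0) then 1 else 0)"
    proof (cases "nz m p")
      case True
      then have "p \<noteq> (\<lambda>_. 0)" by (auto simp: nz_def)
      moreover have "av m p = 0" using av_single[OF True tp_box[OF p t]] .
      ultimately show ?thesis by (simp add: ar_def)
    next
      case False
      then have "p = (\<lambda>_. 0)" using notnz_PP box_PP[OF r p] by blast
      then show ?thesis by (simp add: ar_def Bc_zero av_zero)
    qed
  qed
  also have "\<dots> = 1" using finite_box[OF r] zero_in_box[of r] by (simp add: sum.delta)
  finally show ?thesis .
qed

lemma D_ident:
  assumes r: "r \<in> PP m"
  shows "(\<Sum>p\<in>box r. real (Bc m r p) * ar m p * cc m (\<lambda>i. r i - p i)) = Dc m r"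
proof -
  have "(\<Sum>p\<in>box r. real (Bc m r p) * ar m p * cc m (\<lambda>i. r i - p i)) =
        (\<Sum>p\<in>box r. (if even (tot m r) then 1 else 0) * (real (Bc m r p) * ar m p))"
  proof (rule sum.cong[OF refl])
    fix p assume p: "p \<in> box r"
    show "real (Bc m r p) * ar m p * cc m (\<lambda>i. r i - p i) =
          (if even (tot m r) then 1 else 0) * (real (Bc m r p) * ar m p)"
    proof (cases "av m p = 0")
      case True then show ?thesis by (simp add: ar_def)
    next
      case False
      then have ev: "even (tot m p)" by (rule av_even)
      have "even (tot m (\<lambda>i. r i - p i)) = even (tot m r)"
        unfolding tot_sub[OF p] using ev tot_le[OF p, of m] by (simp add: even_diff_nat not_less)
      then show ?thesis by (simp add: cc_def)
    qed
  qed
  also have "\<dots> = (if even (tot m r) then 1 else 0) * (\<Sum>p\<in>box r. real (Bc m r p) * ar m p)"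
    by (simp add: sum_distrib_left)
  also have "\<dots> = Dc m r"
  proof (cases "tp m r")
    case True
    have "nz m r" using True by (auto simp: tp_def nz_def)
    moreover have "even (tot m r) \<Longrightarrow> (\<Sum>p\<in>box r. real (Bc m r p) * ar m p) = 0"
    proof -
      assume ev: "even (tot m r)"
      have "(\<Sum>p\<in>box r. real (Bc m r p) * ar m p) = real_of_int (\<Sum>p\<in>box r. of_nat (Bc m r p) * av m p)"
        by (simp add: ar_def)
      also have "\<dots> = 0" using av_rec[OF r True ev] by simp
      finally show ?thesis .
    qed
    ultimately show ?thesis using True by (simp add: Dc_def)
  next
    case False
    have "\<not> nz m r \<Longrightarrow> tot m r = 0" by (simp add: nz_def tot_def)
    then show ?thesis using S_single[OF r False] False by (auto simp: Dc_def)
  qed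
  finally show ?thesis .
qed

lemma box_ext0: "r \<in> PP m \<Longrightarrow> bij_betw (ext0 m) (PiE {..<m} (\<lambda>i. {..r i})) (box r)"
  using bij_ext0[of m "\<lambda>i. {..r i}"] by (simp add: box_eq)

lemma tot_ext0: "u \<in> PiE {..<m} B \<Longrightarrow> tot m (ext0 m u) = (\<Sum>i<m. u i)"
  by (simp add: tot_def ext0_def)

lemma geo_box:
  fixes w :: real
  assumes r: "r \<in> PP m" and w: "0 \<le> w" "w < 1"
  shows "(\<Sum>q\<in>box r. w ^ tot m q) \<le> (1 / (1 - w)) ^ m"
proof -
  have "(\<Sum>q\<in>box r. w ^ tot m q) = (\<Sum>u\<in>PiE {..<m} (\<lambda>i. {..r i}). w ^ tot m (ext0 m u))"
    by (rule sum.reindex_bij_betw[OF box_ext0[OF r], symmetric])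
  also have "\<dots> = (\<Sum>u\<in>PiE {..<m} (\<lambda>i. {..r i}). \<Prod>i<m. w ^ u i)"
    by (rule sum.cong[OF refl]) (simp add: tot_ext0 power_sum)
  also have "\<dots> = (\<Prod>i<m. \<Sum>k\<in>{..r i}. w ^ k)"
    by (rule prod_sum_PiE[symmetric]) auto
  also have "\<dots> \<le> (\<Prod>i<m. 1 / (1 - w))"
  proof (rule prod_mono, rule conjI)
    fix i assume "i \<in> {..<m}"
    show "0 \<le> (\<Sum>k\<in>{..r i}. w ^ k)" using w by (simp add: sum_nonneg)
    have "(\<Sum>k\<in>{..r i}. w ^ k) \<le> suminf (\<lambda>k. w ^ k)"
      by (rule sum_le_suminf) (use w in auto)
    also have "\<dots> = 1 / (1 - w)" using w by (simp add: suminf_geometric)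
    finally show "(\<Sum>k\<in>{..r i}. w ^ k) \<le> 1 / (1 - w)" .
  qed
  also have "\<dots> = (1 / (1 - w)) ^ m" by simp
  finally show ?thesis .
qed

lemma bern:
  assumes "m \<ge> 1"
  shows "(1 / (1 - 1 / (2 * real m))) ^ m \<le> 2"
proof -
  have "1 + real m * (- 1 / (2 * real m)) \<le> (1 + (- 1 / (2 * real m))) ^ m"
    by (rule Bernoulli_inequality) (use assms in \<open>auto simp: field_simps\<close>)
  moreover have "1 + real m * (- 1 / (2 * real m)) = 1 / 2" using assms by (simp add: field_simps)
  ultimately have h: "1 / 2 \<le> (1 - 1 / (2 * real m)) ^ m" by simp
  have pos: "0 < (1 - 1 / (2 * real m)) ^ m" using h by linarith
  have "(1 / (1 - 1 / (2 * real m))) ^ m = 1 / (1 - 1 / (2 * real m)) ^ m"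
    by (simp add: power_one_over)
  also have "\<dots> \<le> 1 / (1 / 2)" using h pos by (intro divide_left_mono) auto
  finally show ?thesis by simp
qed

definition pf :: "nat \<Rightarrow> (nat \<Rightarrow> nat) \<Rightarrow> real" where
  "pf m r = (\<Prod>i<m. fact (r i))"

lemma pf_pos: "pf m r > 0" by (simp add: pf_def prod_pos)

lemma Bc_pf: "p \<in> box r \<Longrightarrow> real (Bc m r p) * pf m p \<le> pf m r"
proof -
  assume p: "p \<in> box r"
  have "real (Bc m r p) * pf m p = (\<Prod>i<m. real (r i choose p i) * fact (p i))"
    by (simp add: Bc_def pf_def prod.distrib)
  also have "\<dots> \<le> (\<Prod>i<m. fact (r i))"
  proof (rule prod_mono, rule conjI)
    fix i assume "i \<in> {..<m}"
    show "0 \<le> real (r i choose p i) * fact (p i)" by simp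
    have le: "p i \<le> r i" using p by (simp add: box_def)
    have "(fact (p i) * fact (r i - p i) * (r i choose p i) :: nat) = fact (r i)"
      by (rule binomial_fact_lemma[OF le])
    then have eq: "real (r i choose p i) * fact (p i) * fact (r i - p i) = fact (r i)"
      by (metis (mono_tags, lifting) mult.commute mult.left_commute of_nat_fact of_nat_mult)
    have "real (r i choose p i) * fact (p i) * 1 \<le> real (r i choose p i) * fact (p i) * fact (r i - p i)"
      by (intro mult_left_mono) auto
    then show "real (r i choose p i) * fact (p i) \<le> fact (r i)" using eq by simp
  qed
  finally show ?thesis by (simp add: pf_def)
qed

lemma Bc_self: "Bc m r r = 1" by (simp add: Bc_def)

lemma sum_reflect:
  fixes g :: "nat \<Rightarrow> real"
  assumes r: "r \<in> PP m"
  shows "(\<Sum>p\<in>box r - {r}. g (tot m r - tot m p)) = (\<Sum>q\<in>box r - {\<lambda>_. 0}. g (tot m q))"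
proof (rule sum.reindex_bij_witness[of _ "\<lambda>q i. r i - q i" "\<lambda>p i. r i - p i"])
  fix q assume q: "q \<in> box r - {\<lambda>_. 0}"
  then have qle: "\<And>i. q i \<le> r i" and qne: "q \<noteq> (\<lambda>_. 0)" by (auto simp: box_def)
  show "(\<lambda>i. r i - (r i - q i)) = q"
  proof (rule ext)
    fix i show "r i - (r i - q i) = q i" using qle[of i] by arith
  qed
  have "(\<lambda>i. r i - q i) \<noteq> r"
  proof
    assume eq: "(\<lambda>i. r i - q i) = r"
    have "q i = 0" for i
    proof -
      have "r i - q i = r i" using eq by (rule fun_cong)
      then show "q i = 0" using qle[of i] by arith
    qed
    then have "q = (\<lambda>_. 0)" by (rule ext)
    then show False using qne by simp
  qed
  moreover have "(\<lambda>i. r i - q i) \<in> box r" by (simp add: box_def)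
  ultimately show "(\<lambda>i. r i - q i) \<in> box r - {r}" by simp
next
  fix p assume p: "p \<in> box r - {r}"
  then have ple: "\<And>i. p i \<le> r i" and pne: "p \<noteq> r" by (auto simp: box_def)
  show "(\<lambda>i. r i - (r i - p i)) = p"
  proof (rule ext)
    fix i show "r i - (r i - p i) = p i" using ple[of i] by arith
  qed
  have "(\<lambda>i. r i - p i) \<noteq> (\<lambda>_. 0)"
  proof
    assume eq: "(\<lambda>i. r i - p i) = (\<lambda>_. 0)"
    have "p i = r i" for i
    proof -
      have "r i - p i = 0" using eq by (rule fun_cong)
      then show "p i = r i" using ple[of i] by arith
    qed
    then have "p = r" by (rule ext)
    then show False using pne by simp
  qed
  moreover have "(\<lambda>i. r i - p i) \<in> box r" by (simp add: box_def)
  ultimately show "(\<lambda>i. r i - p i) \<in> box r - {\<lambda>_. 0}" by simp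
  have pb: "p \<in> box r" using p by simp
  show "g (tot m (\<lambda>i. r i - p i)) = g (tot m r - tot m p)" by (simp only: tot_sub[OF pb])
qed

lemma ar_bound:
  assumes m: "m \<ge> 1" and r: "r \<in> PP m"
  shows "\<bar>ar m r\<bar> \<le> (2 * real m) ^ tot m r * pf m r"
  using r
proof (induction "tot m r" arbitrary: r rule: less_induct)
  case less
  note r = less.prems
  define M where "M = 2 * real m"
  have M1: "M \<ge> 2" using m by (simp add: M_def)
  have rhs: "0 \<le> M ^ tot m r * pf m r" using M1 pf_pos[of m r] by simp
  show ?case
  proof (cases "av m r = 0")
    case True then show ?thesis using rhs by (simp add: ar_def M_def)
  next
    case False
    show ?thesis
    proof (cases "nz m r")
      case nz0: False
      then have "r = (\<lambda>_. 0)" by (rule notnz_PP[OF r])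
      then show ?thesis by (simp add: ar_def av_zero tot_def pf_def)
    next
      case nz: True
      have t: "tp m r" using av_single[OF nz] False by blast
      have e: "even (tot m r)" using av_even False by blast
      have fin: "finite (box r)" by (rule finite_box[OF r])
      have rin: "r \<in> box r" by (simp add: box_def)
      have "(\<Sum>p\<in>box r. real (Bc m r p) * ar m p) = real_of_int (\<Sum>p\<in>box r. of_nat (Bc m r p) * av m p)"
        by (simp add: ar_def)
      also have "\<dots> = 0" using av_rec[OF r t e] by simp
      finally have s0: "(\<Sum>p\<in>box r. real (Bc m r p) * ar m p) = 0" .
      have "(\<Sum>p\<in>box r. real (Bc m r p) * ar m p) = real (Bc m r r) * ar m r + (\<Sum>p\<in>box r - {r}. real (Bc m r p) * ar m p)"
        using fin rin by (simp add: sum.remove)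
      then have arr: "ar m r = - (\<Sum>p\<in>box r - {r}. real (Bc m r p) * ar m p)"
        using s0 by (simp add: Bc_self)
      have "\<bar>ar m r\<bar> \<le> (\<Sum>p\<in>box r - {r}. \<bar>real (Bc m r p) * ar m p\<bar>)"
        unfolding arr abs_minus_cancel by (rule sum_abs)
      also have "\<dots> \<le> (\<Sum>p\<in>box r - {r}. M ^ tot m p * pf m r)"
      proof (rule sum_mono)
        fix p assume p: "p \<in> box r - {r}"
        have pP: "p \<in> PP m" using box_PP[OF r] p by auto
        have "tot m p < tot m r" using tot_less[OF r] p by auto
        then have ih: "\<bar>ar m p\<bar> \<le> M ^ tot m p * pf m p" using less.hyps pP by (simp add: M_def)
        have "\<bar>real (Bc m r p) * ar m p\<bar> = real (Bc m r p) * \<bar>ar m p\<bar>" by (simp add: abs_mult)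
        also have "\<dots> \<le> real (Bc m r p) * (M ^ tot m p * pf m p)" by (rule mult_left_mono[OF ih]) simp
        also have "\<dots> = M ^ tot m p * (real (Bc m r p) * pf m p)" by simp
        also have "\<dots> \<le> M ^ tot m p * pf m r"
          by (rule mult_left_mono[OF Bc_pf]) (use p M1 in auto)
        finally show "\<bar>real (Bc m r p) * ar m p\<bar> \<le> M ^ tot m p * pf m r" .
      qed
      also have "\<dots> = M ^ tot m r * pf m r * (\<Sum>p\<in>box r - {r}. (1 / M) ^ (tot m r - tot m p))"
      proof -
        have "M ^ tot m p = M ^ tot m r * (1 / M) ^ (tot m r - tot m p)" if p: "p \<in> box r" for p
        proof -
          have "M ^ tot m r = M ^ tot m p * M ^ (tot m r - tot m p)"
            using tot_le[OF p, of m] by (simp add: power_add[symmetric])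
          then show ?thesis using M1 by (simp add: power_one_over)
        qed
        then show ?thesis by (simp add: sum_distrib_left sum_distrib_right mult_ac)
      qed
      finally have A: "\<bar>ar m r\<bar> \<le> M ^ tot m r * pf m r * (\<Sum>p\<in>box r - {r}. (1 / M) ^ (tot m r - tot m p))" .
      have "(\<Sum>p\<in>box r - {r}. (1 / M) ^ (tot m r - tot m p)) = (\<Sum>q\<in>box r - {\<lambda>_. 0}. (1 / M) ^ tot m q)"
        by (rule sum_reflect[OF r])
      also have "\<dots> = (\<Sum>q\<in>box r. (1 / M) ^ tot m q) - 1"
        using fin zero_in_box[of r] by (simp add: sum.remove tot_def)
      also have "\<dots> \<le> 1"
      proof -
        have "(\<Sum>q\<in>box r. (1 / M) ^ tot m q) \<le> (1 / (1 - 1 / M)) ^ m"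
          by (rule geo_box[OF r]) (use M1 in auto)
        also have "\<dots> \<le> 2" using bern[OF m] by (simp add: M_def)
        finally show ?thesis by simp
      qed
      finally have S: "(\<Sum>p\<in>box r - {r}. (1 / M) ^ (tot m r - tot m p)) \<le> 1" .
      have "M ^ tot m r * pf m r * (\<Sum>p\<in>box r - {r}. (1 / M) ^ (tot m r - tot m p)) \<le> M ^ tot m r * pf m r * 1"
        by (rule mult_left_mono[OF S rhs])
      then have "M ^ tot m r * pf m r * (\<Sum>p\<in>box r - {r}. (1 / M) ^ (tot m r - tot m p)) \<le> M ^ tot m r * pf m r"
        by (simp only: mult_1_right)
      from order_trans[OF A this] show ?thesis by (simp only: M_def)
    qed
  qed
qed

lemma PP_ext0: "{p. (\<forall>i<m. p i \<in> UNIV) \<and> (\<forall>i\<ge>m. p i = 0)} = PP m"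
  by (simp add: PP_def)

lemma prod_family:
  fixes f :: "nat \<Rightarrow> nat \<Rightarrow> real"
  assumes sf: "\<And>i. i < m \<Longrightarrow> (\<lambda>k. norm (f i k)) summable_on UNIV"
  shows "((\<lambda>p. \<Prod>i<m. f i (p i)) has_sum (\<Prod>i<m. infsum (f i) UNIV)) (PP m)"
    and "(\<lambda>p. norm (\<Prod>i<m. f i (p i))) summable_on (PP m)"
proof -
  let ?B = "PiE {..<m} (\<lambda>_. UNIV :: nat set)"
  have "Infinite_Set_Sum.abs_summable_on (\<lambda>g. \<Prod>i\<in>{..<m}. f i (g i)) ?B"
  proof (rule abs_summable_on_prod_PiE)
    fix i assume "i \<in> {..<m}"
    then have "(\<lambda>k. norm (f i k)) summable_on UNIV" using sf by simp
    then show "Infinite_Set_Sum.abs_summable_on (f i) UNIV" using abs_summable_equivalent by blast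
  qed auto
  then have ns: "(\<lambda>g. norm (\<Prod>i\<in>{..<m}. f i (g i))) summable_on ?B"
    by (rule iffD2[OF abs_summable_equivalent])
  have val: "infsum (\<lambda>g. \<Prod>i\<in>{..<m}. f i (g i)) ?B = (\<Prod>i\<in>{..<m}. infsum (f i) UNIV)"
    by (rule infsum_prod_PiE_abs) (use sf in auto)
  have su: "(\<lambda>g. \<Prod>i\<in>{..<m}. f i (g i)) summable_on ?B"
    using ns summable_on_iff_abs_summable_on_real by blast
  have hs: "((\<lambda>g. \<Prod>i\<in>{..<m}. f i (g i)) has_sum (\<Prod>i<m. infsum (f i) UNIV)) ?B"
    using su val has_sum_iff by blast
  have bij: "bij_betw (ext0 m) ?B (PP m)" using bij_ext0[of m "\<lambda>_. UNIV"] by (simp add: PP_def)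
  have eqf: "(\<Prod>i<m. f i (ext0 m g i)) = (\<Prod>i<m. f i (g i))" for g
    by (rule prod.cong) (auto simp: ext0_def)
  show "((\<lambda>p. \<Prod>i<m. f i (p i)) has_sum (\<Prod>i<m. infsum (f i) UNIV)) (PP m)"
    using has_sum_reindex_bij_betw[OF bij, of "\<lambda>p. \<Prod>i<m. f i (p i)"] hs eqf by simp
  have h1: "((\<lambda>g. norm (\<Prod>i<m. f i (g i))) has_sum infsum (\<lambda>g. norm (\<Prod>i\<in>{..<m}. f i (g i))) ?B) ?B"
    using ns by (rule has_sum_infsum)
  then have "((\<lambda>g. norm (\<Prod>i<m. f i (ext0 m g i))) has_sum infsum (\<lambda>g. norm (\<Prod>i\<in>{..<m}. f i (g i))) ?B) ?B"
    using eqf by simp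
  then have "((\<lambda>p. norm (\<Prod>i<m. f i (p i))) has_sum infsum (\<lambda>g. norm (\<Prod>i\<in>{..<m}. f i (g i))) ?B) (PP m)"
    using has_sum_reindex_bij_betw[OF bij, of "\<lambda>p. norm (\<Prod>i<m. f i (p i))"] by simp
  then show "(\<lambda>p. norm (\<Prod>i<m. f i (p i))) summable_on (PP m)" by (rule has_sum_imp_summable)
qed

definition mon :: "nat \<Rightarrow> (nat \<Rightarrow> real) \<Rightarrow> (nat \<Rightarrow> nat) \<Rightarrow> real" where
  "mon m x p = (\<Prod>i<m. x i ^ p i / fact (p i))"

lemma exp_has_sum_nat: fixes y :: real shows "((\<lambda>k. y ^ k / fact k) has_sum exp y) UNIV"
  and exp_norm_nat: "(\<lambda>k. norm (y ^ k / fact k)) summable_on UNIV"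
proof -
  have s: "summable (\<lambda>n. norm (y ^ n / fact n))"
    using summable_exp[of "\<bar>y\<bar>"] by (simp add: abs_mult power_abs divide_inverse mult.commute)
  have "(\<lambda>n. y ^ n /\<^sub>R fact n) sums exp y" by (rule exp_converges)
  then have "(\<lambda>n. y ^ n / fact n) sums exp y" by (simp add: divide_inverse scaleR_conv_of_real mult.commute)
  then show "((\<lambda>k. y ^ k / fact k) has_sum exp y) UNIV" using s by (intro norm_summable_imp_has_sum)
  have "summable (\<lambda>n. norm (norm (y ^ n / fact n)))" using s by simp
  then show "(\<lambda>k. norm (y ^ k / fact k)) summable_on UNIV" by (rule norm_summable_imp_summable_on)
qed

lemma mon_exp:
  "((\<lambda>p. mon m x p) has_sum exp (\<Sum>i<m. x i)) (PP m)"
  "(\<lambda>p. norm (mon m x p)) summable_on (PP m)"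
proof -
  have sf: "\<And>i. i < m \<Longrightarrow> (\<lambda>k. norm (x i ^ k / fact k)) summable_on UNIV" by (rule exp_norm_nat)
  have inf: "infsum (\<lambda>k. x i ^ k / fact k) UNIV = exp (x i)" for i
    using exp_has_sum_nat[of "x i"] by (simp add: has_sum_iff)
  have "exp (\<Sum>i<m. x i) = (\<Prod>i<m. exp (x i))" by (simp add: exp_sum)
  then show "((\<lambda>p. mon m x p) has_sum exp (\<Sum>i<m. x i)) (PP m)"
    using prod_family(1)[of m "\<lambda>i k. x i ^ k / fact k", OF sf] inf by (simp add: mon_def)
  show "(\<lambda>p. norm (mon m x p)) summable_on (PP m)"
    using prod_family(2)[of m "\<lambda>i k. x i ^ k / fact k", OF sf] by (simp add: mon_def)
qed

lemma geo_family:
  fixes c :: real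
  assumes "\<And>i. i < m \<Longrightarrow> \<bar>c * x i\<bar> < 1"
  shows "(\<lambda>p. \<Prod>i<m. \<bar>c * x i\<bar> ^ p i) summable_on (PP m)"
proof -
  have sf: "(\<lambda>k. norm (\<bar>c * x i\<bar> ^ k)) summable_on UNIV" if "i < m" for i
  proof -
    have "summable (\<lambda>n. norm (norm (\<bar>c * x i\<bar> ^ n)))"
      using assms[OF that] by (simp add: summable_geometric power_abs)
    then show ?thesis by (rule norm_summable_imp_summable_on)
  qed
  have "(\<lambda>p. norm (\<Prod>i<m. \<bar>c * x i\<bar> ^ p i)) summable_on (PP m)"
    using prod_family(2)[of m "\<lambda>i k. \<bar>c * x i\<bar> ^ k"] sf by blast
  then show ?thesis by (simp add: prod_nonneg abs_prod)
qed

lemma mon_abs: "\<bar>mon m x p\<bar> = (\<Prod>i<m. \<bar>x i\<bar> ^ p i) / pf m p"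
  by (simp add: mon_def pf_def abs_prod prod_dividef power_abs)

lemma A_summable:
  assumes m: "m \<ge> 1" and x: "\<And>i. i < m \<Longrightarrow> \<bar>x i\<bar> < 1 / (2 * real m)"
  shows "(\<lambda>p. ar m p * mon m x p) summable_on (PP m)"
proof -
  let ?c = "2 * real m"
  have cx: "\<bar>?c * x i\<bar> < 1" if "i < m" for i
    using x[OF that] m by (simp add: abs_mult field_simps)
  have g: "(\<lambda>p. \<Prod>i<m. \<bar>?c * x i\<bar> ^ p i) summable_on (PP m)" by (rule geo_family) (use cx in auto)
  have "(\<lambda>p. norm (ar m p * mon m x p)) summable_on (PP m)"
  proof (rule summable_on_comparison_test[OF g])
    fix p assume p: "p \<in> PP m"
    show "0 \<le> norm (ar m p * mon m x p)" by simp
    have b: "\<bar>ar m p\<bar> \<le> ?c ^ tot m p * pf m p" by (rule ar_bound[OF m p])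
    have "norm (ar m p * mon m x p) = \<bar>ar m p\<bar> * ((\<Prod>i<m. \<bar>x i\<bar> ^ p i) / pf m p)"
      by (simp add: abs_mult mon_abs)
    also have "\<dots> \<le> (?c ^ tot m p * pf m p) * ((\<Prod>i<m. \<bar>x i\<bar> ^ p i) / pf m p)"
      by (rule mult_right_mono[OF b]) (simp add: prod_nonneg pf_pos less_imp_le)
    also have "\<dots> = ?c ^ tot m p * (\<Prod>i<m. \<bar>x i\<bar> ^ p i)"
      using pf_pos[of m p] by simp
    also have "\<dots> = (\<Prod>i<m. \<bar>?c * x i\<bar> ^ p i)"
      using m by (simp add: tot_def power_sum prod.distrib[symmetric] abs_mult power_mult_distrib)
    finally show "norm (ar m p * mon m x p) \<le> (\<Prod>i<m. \<bar>?c * x i\<bar> ^ p i)" .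
  qed
  then show ?thesis using summable_on_iff_abs_summable_on_real by blast
qed

lemma has_sum_sum_fin:
  fixes f :: "'i \<Rightarrow> 'a \<Rightarrow> real"
  assumes "finite I" "\<And>i. i \<in> I \<Longrightarrow> (f i has_sum s i) A"
  shows "((\<lambda>x. \<Sum>i\<in>I. f i x) has_sum (\<Sum>i\<in>I. s i)) A"
  using assms
proof (induction I rule: finite_induct)
  case empty then show ?case by simp
next
  case (insert j I)
  have "((\<lambda>x. f j x + (\<Sum>i\<in>I. f i x)) has_sum (s j + (\<Sum>i\<in>I. s i))) A"
    by (rule has_sum_add) (use insert in auto)
  then show ?case using insert by simp
qed

lemma mon_neg: "mon m (\<lambda>i. - x i) q = (-1) ^ tot m q * mon m x q"
proof -
  have "mon m (\<lambda>i. - x i) q = (\<Prod>i<m. (-1) ^ q i * (x i ^ q i / fact (q i)))"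
    unfolding mon_def
  proof (rule prod.cong[OF refl])
    fix i
    have "(- x i) ^ q i = (-1) ^ q i * x i ^ q i" by (rule power_minus)
    then show "(- x i) ^ q i / fact (q i) = (-1) ^ q i * (x i ^ q i / fact (q i))" by simp
  qed
  also have "\<dots> = (\<Prod>i<m. (-1::real) ^ q i) * mon m x q"
    unfolding mon_def by (rule prod.distrib)
  also have "(\<Prod>i<m. (-1::real) ^ q i) = (-1) ^ tot m q"
    unfolding tot_def by (rule power_sum[symmetric])
  finally show ?thesis .
qed

lemma cosh_multi:
  "((\<lambda>q. cc m q * mon m x q) has_sum cosh (\<Sum>i<m. x i)) (PP m)"
  "(\<lambda>q. norm (cc m q * mon m x q)) summable_on (PP m)"
proof -
  have eq: "cc m q * mon m x q = (mon m x q + mon m (\<lambda>i. - x i) q) / 2" for q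
    unfolding mon_neg cc_def by (cases "even (tot m q)") auto
  have "((\<lambda>q. mon m x q + mon m (\<lambda>i. - x i) q) has_sum (exp (\<Sum>i<m. x i) + exp (\<Sum>i<m. - x i))) (PP m)"
    by (rule has_sum_add; rule mon_exp)
  then have "((\<lambda>q. (mon m x q + mon m (\<lambda>i. - x i) q) / 2) has_sum (exp (\<Sum>i<m. x i) + exp (\<Sum>i<m. - x i)) / 2) (PP m)"
    by (rule has_sum_divide_const)
  moreover have "(exp (\<Sum>i<m. x i) + exp (\<Sum>i<m. - x i)) / 2 = cosh (\<Sum>i<m. x i)"
    by (simp add: cosh_def sum_negf)
  ultimately show "((\<lambda>q. cc m q * mon m x q) has_sum cosh (\<Sum>i<m. x i)) (PP m)"
    unfolding eq by simp
  show "(\<lambda>q. norm (cc m q * mon m x q)) summable_on (PP m)"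
  proof (rule summable_on_comparison_test[OF mon_exp(2)])
    fix q show "norm (cc m q * mon m x q) \<le> norm (mon m x q)" by (simp add: cc_def abs_mult)
  qed simp
qed

definition sgl :: "nat \<Rightarrow> nat \<Rightarrow> nat \<Rightarrow> nat" where
  "sgl i k = (\<lambda>j. if j = i then k else 0)"

definition GG :: "nat \<Rightarrow> (nat \<Rightarrow> real) \<Rightarrow> nat \<Rightarrow> (nat \<Rightarrow> nat) \<Rightarrow> real" where
  "GG m x i r = (if \<exists>k. even k \<and> r = sgl i k then mon m x r else 0)"

lemma sgl_inj: "inj (sgl i)"
proof (rule injI)
  fix a b assume "sgl i a = sgl i b"
  then have "sgl i a i = sgl i b i" by simp
  then show "a = b" by (simp add: sgl_def)
qed

lemma mon_sgl: "i < m \<Longrightarrow> mon m x (sgl i k) = x i ^ k / fact k"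
proof -
  assume i: "i < m"
  have "mon m x (sgl i k) = (\<Prod>j<m. if j = i then x i ^ k / fact k else 1)"
    unfolding mon_def by (rule prod.cong[OF refl]) (simp add: sgl_def)
  also have "\<dots> = x i ^ k / fact k" using i by (simp add: prod.delta)
  finally show ?thesis .
qed

lemma cosh_has_sum_nat: "((\<lambda>k. if even k then y ^ k / fact k else 0) has_sum cosh (y::real)) UNIV"
proof -
  have "((\<lambda>k. (y ^ k / fact k + (- y) ^ k / fact k) / 2) has_sum (exp y + exp (- y)) / 2) UNIV"
    by (rule has_sum_divide_const, rule has_sum_add; rule exp_has_sum_nat)
  moreover have "(\<lambda>k. (y ^ k / fact k + (- y) ^ k / fact k) / 2) = (\<lambda>k. if even k then y ^ k / fact k else 0)"
  proof (rule ext)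
    fix k
    show "(y ^ k / fact k + (- y) ^ k / fact k) / 2 = (if even k then y ^ k / fact k else 0)"
    proof (cases "even k")
      case True
      then have "(- y) ^ k = y ^ k" by (rule power_minus_even)
      then show ?thesis using True by simp
    next
      case False
      then have "(- y) ^ k = - (y ^ k)" by (rule power_minus_odd)
      then show ?thesis using False by simp
    qed
  qed
  ultimately show ?thesis by (simp add: cosh_def)
qed

lemma GG_has_sum:
  assumes i: "i < m"
  shows "(GG m x i has_sum cosh (x i)) (PP m)"
proof -
  have "((GG m x i \<circ> sgl i) has_sum cosh (x i)) UNIV"
  proof -
    have "(GG m x i \<circ> sgl i) = (\<lambda>k. if even k then x i ^ k / fact k else 0)"
    proof (rule ext)
      fix k
      have "(\<exists>k'. even k' \<and> sgl i k = sgl i k') \<longleftrightarrow> even k"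
      proof
        assume "\<exists>k'. even k' \<and> sgl i k = sgl i k'"
        then obtain k' where "even k'" "sgl i k = sgl i k'" by blast
        then show "even k" using injD[OF sgl_inj] by metis
      qed blast
      then show "(GG m x i \<circ> sgl i) k = (if even k then x i ^ k / fact k else 0)"
        by (simp add: GG_def mon_sgl[OF i])
    qed
    then show ?thesis using cosh_has_sum_nat by simp
  qed
  then have "(GG m x i has_sum cosh (x i)) (range (sgl i))"
    using has_sum_reindex[of "sgl i" UNIV] sgl_inj by blast
  moreover have "range (sgl i) \<subseteq> PP m" using i by (auto simp: PP_def sgl_def)
  moreover have "GG m x i r = 0" if "r \<in> PP m - range (sgl i)" for r
    using that by (auto simp: GG_def)
  ultimately show ?thesis
    by (intro has_sum_cong_neutral[THEN iffD2, of "range (sgl i)" "PP m" "GG m x i" "GG m x i"]) auto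
qed

lemma zero_PP: "(\<lambda>_. 0) \<in> PP m" by (simp add: PP_def)

lemma mon_zero: "mon m x (\<lambda>_. 0) = 1" by (simp add: mon_def)

lemma GG_zero: "GG m x i (\<lambda>_. 0) = 1"
proof -
  have "sgl i 0 = (\<lambda>_. 0)" by (simp add: sgl_def fun_eq_iff)
  then have "\<exists>k. even k \<and> (\<lambda>_. 0) = sgl i k" by (intro exI[of _ 0]) simp
  then show ?thesis by (simp add: GG_def mon_zero)
qed

lemma Dc_point:
  assumes r: "r \<in> PP m"
  shows "Dc m r * mon m x r = (if r = (\<lambda>_. 0) then 1 - real m else 0) + (\<Sum>i<m. GG m x i r)"
proof (cases "r = (\<lambda>_. 0)")
  case True
  have "\<not> nz m r" using True by (simp add: nz_def)
  then show ?thesis using True by (simp add: Dc_def mon_zero GG_zero)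
next
  case False
  have nzr: "nz m r" using notnz_PP[OF r] False by blast
  show ?thesis
  proof (cases "tp m r")
    case True
    have "GG m x i r = 0" for i
    proof -
      have "\<not> (\<exists>k. even k \<and> r = sgl i k)"
      proof
        assume "\<exists>k. even k \<and> r = sgl i k"
        then obtain k where k: "r = sgl i k" by blast
        obtain a b where ab: "a < m" "b < m" "a \<noteq> b" "0 < r a" "0 < r b" using True by (auto simp: tp_def)
        have "a = i" using ab(4) k by (auto simp: sgl_def split: if_splits)
        moreover have "b = i" using ab(5) k by (auto simp: sgl_def split: if_splits)
        ultimately show False using ab(3) by simp
      qed
      then show ?thesis unfolding GG_def by (rule if_not_P)
    qed
    then show ?thesis using True nzr False by (simp add: Dc_def)
  next
    case ntp: False
    obtain i0 where i0: "i0 < m" "0 < r i0" using nzr by (auto simp: nz_def)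
    have rs: "r = sgl i0 (r i0)"
    proof (rule ext)
      fix j show "r j = sgl i0 (r i0) j"
      proof (cases "j = i0")
        case True then show ?thesis by (simp add: sgl_def)
      next
        case jne: False
        show ?thesis
        proof (cases "j < m")
          case True
          have "r j = 0"
          proof (rule ccontr)
            assume "r j \<noteq> 0"
            then have rj: "0 < r j" by simp
            have "tp m r" unfolding tp_def using True i0 jne rj by blast
            then show False using ntp by simp
          qed
          then show ?thesis using jne by (simp add: sgl_def)
        next
          case False then show ?thesis using r jne by (simp add: PP_def sgl_def)
        qed
      qed
    qed
    have totr: "tot m r = r i0"
    proof -
      have "tot m r = (\<Sum>j<m. sgl i0 (r i0) j)" unfolding tot_def by (subst rs) (rule refl)
      also have "\<dots> = r i0" using i0 by (simp add: sgl_def)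
      finally show ?thesis .
    qed
    have G: "GG m x i r = (if i = i0 then (if even (r i0) then mon m x r else 0) else 0)" for i
    proof (cases "i = i0")
      case True
      have "(\<exists>k. even k \<and> r = sgl i0 k) \<longleftrightarrow> even (r i0)"
      proof
        assume "\<exists>k. even k \<and> r = sgl i0 k"
        then obtain k where "even k" "r = sgl i0 k" by blast
        then show "even (r i0)" by (simp add: sgl_def)
      next
        assume "even (r i0)" then show "\<exists>k. even k \<and> r = sgl i0 k" using rs by blast
      qed
      then show ?thesis using True by (simp add: GG_def)
    next
      case False
      have "\<not> (\<exists>k. even k \<and> r = sgl i k)"
      proof
        assume "\<exists>k. even k \<and> r = sgl i k"
        then obtain k where "r = sgl i k" by blast
        then have "r i0 = 0" using False by (simp add: sgl_def)
        then show False using i0 by simp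
      qed
      then have "GG m x i r = 0" unfolding GG_def by (rule if_not_P)
      then show ?thesis using False by simp
    qed
    have "(\<Sum>i<m. GG m x i r) = (if even (r i0) then mon m x r else 0)"
      unfolding G using i0 by simp
    then show ?thesis using False nzr ntp totr by (simp add: Dc_def)
  qed
qed

lemma Dc_series:
  "((\<lambda>r. Dc m r * mon m x r) has_sum (1 - real m + (\<Sum>i<m. cosh (x i)))) (PP m)"
proof -
  have c: "((\<lambda>r. if r = (\<lambda>_. 0) then 1 - real m else 0) has_sum (1 - real m)) (PP m)"
    by (rule has_sum_finite_neutralI[where B="{\<lambda>_. 0}"]) (auto simp: zero_PP)
  have s: "((\<lambda>r. \<Sum>i<m. GG m x i r) has_sum (\<Sum>i<m. cosh (x i))) (PP m)"
    by (rule has_sum_sum_fin) (auto intro: GG_has_sum)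
  have "((\<lambda>r. (if r = (\<lambda>_. 0) then 1 - real m else 0) + (\<Sum>i<m. GG m x i r)) has_sum
         (1 - real m + (\<Sum>i<m. cosh (x i)))) (PP m)"
    by (rule has_sum_add[OF c s])
  then show ?thesis by (subst has_sum_cong[OF Dc_point]) auto
qed

lemma mon_mult_box:
  assumes p: "p \<in> box r"
  shows "mon m x p * mon m x (\<lambda>i. r i - p i) = real (Bc m r p) * mon m x r"
proof -
  have fac: "x i ^ p i / fact (p i) * (x i ^ (r i - p i) / fact (r i - p i)) =
             real (r i choose p i) * (x i ^ r i / fact (r i))" for i
  proof -
    have le: "p i \<le> r i" using p by (simp add: box_def)
    have F: "(fact (p i) * fact (r i - p i) * (r i choose p i) :: nat) = fact (r i)"
      by (rule binomial_fact_lemma[OF le])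
    then have Fr: "fact (p i) * fact (r i - p i) * real (r i choose p i) = fact (r i)"
      by (metis of_nat_fact of_nat_mult)
    have X: "x i ^ p i * x i ^ (r i - p i) = x i ^ r i"
      using le by (simp add: power_add[symmetric])
    have pos: "(fact (p i) :: real) > 0" "(fact (r i - p i) :: real) > 0" by simp_all
    have "real (r i choose p i) * (x i ^ r i / fact (r i)) =
          real (r i choose p i) * (x i ^ r i / (fact (p i) * fact (r i - p i) * real (r i choose p i)))"
      by (simp only: Fr)
    also have "\<dots> = x i ^ r i / (fact (p i) * fact (r i - p i))"
    proof -
      have "real (r i choose p i) \<noteq> 0" using le by simp
      then show ?thesis using pos by (simp add: field_simps)
    qed
    also have "\<dots> = x i ^ p i / fact (p i) * (x i ^ (r i - p i) / fact (r i - p i))"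
      using X by simp
    finally show ?thesis by simp
  qed
  have "mon m x p * mon m x (\<lambda>i. r i - p i) =
        (\<Prod>i<m. x i ^ p i / fact (p i) * (x i ^ (r i - p i) / fact (r i - p i)))"
    unfolding mon_def by (rule prod.distrib[symmetric])
  also have "\<dots> = (\<Prod>i<m. real (r i choose p i) * (x i ^ r i / fact (r i)))"
    by (rule prod.cong[OF refl]) (rule fac)
  also have "\<dots> = (\<Prod>i<m. real (r i choose p i)) * mon m x r"
    unfolding mon_def by (rule prod.distrib)
  also have "(\<Prod>i<m. real (r i choose p i)) = real (Bc m r p)"
    by (simp add: Bc_def)
  finally show ?thesis .
qed

lemma bij_conv:
  "bij_betw (\<lambda>(r, p). (p, \<lambda>i. r i - p i)) (Sigma (PP m) box) (PP m \<times> PP m)"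
proof (rule bij_betw_byWitness[where f'="\<lambda>(p, q). (\<lambda>i. p i + q i, p)"])
  show "\<forall>a\<in>Sigma (PP m) box. (case (case a of (r, p) \<Rightarrow> (p, \<lambda>i. r i - p i)) of (p, q) \<Rightarrow> (\<lambda>i. p i + q i, p)) = a"
  proof
    fix a assume "a \<in> Sigma (PP m) box"
    then obtain r p where a: "a = (r, p)" "p \<in> box r" by auto
    have "(\<lambda>i. p i + (r i - p i)) = r"
    proof (rule ext)
      fix i have "p i \<le> r i" using a(2) by (simp add: box_def)
      then show "p i + (r i - p i) = r i" by arith
    qed
    then show "(case (case a of (r, p) \<Rightarrow> (p, \<lambda>i. r i - p i)) of (p, q) \<Rightarrow> (\<lambda>i. p i + q i, p)) = a"
      using a by simp
  qed
  show "\<forall>a'\<in>PP m \<times> PP m. (case (case a' of (p, q) \<Rightarrow> (\<lambda>i. p i + q i, p)) of (r, p) \<Rightarrow> (p, \<lambda>i. r i - p i)) = a'"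
    by auto
  show "(\<lambda>(r, p). (p, \<lambda>i. r i - p i)) ` Sigma (PP m) box \<subseteq> PP m \<times> PP m"
  proof
    fix z assume "z \<in> (\<lambda>(r, p). (p, \<lambda>i. r i - p i)) ` Sigma (PP m) box"
    then obtain r p where rp: "r \<in> PP m" "p \<in> box r" "z = (p, \<lambda>i. r i - p i)" by auto
    have "p \<in> PP m" by (rule box_PP[OF rp(1,2)])
    moreover have "(\<lambda>i. r i - p i) \<in> PP m" using rp(1) by (simp add: PP_def)
    ultimately show "z \<in> PP m \<times> PP m" using rp(3) by simp
  qed
  show "(\<lambda>(p, q). (\<lambda>i. p i + q i, p)) ` (PP m \<times> PP m) \<subseteq> Sigma (PP m) box"
    by (auto simp: PP_def box_def)
qed

lemma conv:
  assumes sA: "(\<lambda>p. norm (ar m p * mon m x p)) summable_on (PP m)"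
  shows "((\<lambda>r. Dc m r * mon m x r) has_sum (infsum (\<lambda>p. ar m p * mon m x p) (PP m) * cosh (\<Sum>i<m. x i))) (PP m)"
proof -
  define fA where "fA p = ar m p * mon m x p" for p
  define fC where "fC q = cc m q * mon m x q" for q
  define F where "F z = fA (fst z) * fC (snd z)" for z
  define A where "A = infsum fA (PP m)"
  define C where "C = cosh (\<Sum>i<m. x i)"
  have sA': "(\<lambda>p. norm (fA p)) summable_on (PP m)" using sA unfolding fA_def .
  have sumA: "fA summable_on (PP m)" using sA' summable_on_iff_abs_summable_on_real by blast
  have hA: "(fA has_sum A) (PP m)" using sumA by (simp add: A_def)
  have hC: "(fC has_sum C) (PP m)" unfolding fC_def C_def by (rule cosh_multi(1))
  have sC: "(\<lambda>q. norm (fC q)) summable_on (PP m)" unfolding fC_def by (rule cosh_multi(2))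
  define NC where "NC = infsum (\<lambda>q. norm (fC q)) (PP m)"
  have NC0: "NC \<ge> 0" unfolding NC_def by (rule infsum_nonneg) simp
  have absF: "(\<lambda>z. norm (F z)) summable_on (Sigma (PP m) (\<lambda>_. PP m))"
  proof (rule Infinite_Sum.abs_summable_on_Sigma_iff[THEN iffD2], intro conjI ballI)
    fix p assume "p \<in> PP m"
    show "(\<lambda>q. norm (F (p, q))) summable_on (PP m)"
      using summable_on_cmult_right[OF sC, of "norm (fA p)"] unfolding F_def norm_mult by simp
  next
    have "(\<lambda>p. norm (fA p) * NC) summable_on (PP m)" using sA' by (rule summable_on_cmult_left)
    moreover have "norm (infsum (\<lambda>q. norm (F (p, q))) (PP m)) = norm (fA p) * NC" for p
    proof -
      have "infsum (\<lambda>q. norm (F (p, q))) (PP m) = infsum (\<lambda>q. norm (fA p) * norm (fC q)) (PP m)"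
        by (simp add: F_def abs_mult)
      also have "\<dots> = norm (fA p) * NC" unfolding NC_def by (rule infsum_cmult_right') 
      finally show ?thesis using NC0 by simp
    qed
    ultimately show "(\<lambda>p. norm (infsum (\<lambda>q. norm (F (p, q))) (PP m))) summable_on (PP m)" by simp
  qed
  have sF: "F summable_on (Sigma (PP m) (\<lambda>_. PP m))"
    using absF summable_on_iff_abs_summable_on_real by blast
  have hF: "(F has_sum A * C) (Sigma (PP m) (\<lambda>_. PP m))"
  proof (rule has_sum_SigmaI[OF _ _ sF])
    fix p assume "p \<in> PP m"
    show "((\<lambda>q. F (p, q)) has_sum fA p * C) (PP m)" unfolding F_def using hC by (simp add: has_sum_cmult_right)
  next
    show "((\<lambda>p. fA p * C) has_sum A * C) (PP m)" using hA by (rule has_sum_cmult_left)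
  qed
  have hF2: "(F has_sum A * C) (PP m \<times> PP m)" using hF by simp
  have hFh: "((\<lambda>z. F ((\<lambda>(r, p). (p, \<lambda>i. r i - p i)) z)) has_sum A * C) (Sigma (PP m) box)"
    using has_sum_reindex_bij_betw[OF bij_conv, where f=F and S="A * C"] hF2 by simp
  have hS: "((\<lambda>r. \<Sum>p\<in>box r. F (p, \<lambda>i. r i - p i)) has_sum A * C) (PP m)"
  proof (rule has_sum_Sigma'[OF hFh])
    fix r assume r: "r \<in> PP m"
    show "((\<lambda>p. F ((\<lambda>(r, p). (p, \<lambda>i. r i - p i)) (r, p))) has_sum (\<Sum>p\<in>box r. F (p, \<lambda>i. r i - p i))) (box r)"
      by (rule has_sum_finiteI) (simp_all add: finite_box[OF r])
  qed
  have pt: "(\<Sum>p\<in>box r. F (p, \<lambda>i. r i - p i)) = Dc m r * mon m x r" if r: "r \<in> PP m" for r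
  proof -
    have "(\<Sum>p\<in>box r. F (p, \<lambda>i. r i - p i)) = (\<Sum>p\<in>box r. mon m x r * (real (Bc m r p) * ar m p * cc m (\<lambda>i. r i - p i)))"
    proof (rule sum.cong[OF refl])
      fix p assume p: "p \<in> box r"
      have "F (p, \<lambda>i. r i - p i) = ar m p * cc m (\<lambda>i. r i - p i) * (mon m x p * mon m x (\<lambda>i. r i - p i))"
        by (simp add: F_def fA_def fC_def mult_ac)
      also have "\<dots> = mon m x r * (real (Bc m r p) * ar m p * cc m (\<lambda>i. r i - p i))"
        unfolding mon_mult_box[OF p] by (simp add: mult_ac)
      finally show "F (p, \<lambda>i. r i - p i) = mon m x r * (real (Bc m r p) * ar m p * cc m (\<lambda>i. r i - p i))" .
    qed
    also have "\<dots> = mon m x r * Dc m r" by (simp add: sum_distrib_left[symmetric] D_ident[OF r])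
    finally show ?thesis by simp
  qed
  have "((\<lambda>r. Dc m r * mon m x r) has_sum A * C) (PP m)"
    using hS by (subst has_sum_cong[OF pt, symmetric]) auto
  then show ?thesis unfolding A_def C_def fA_def[abs_def] .
qed

theorem mainTheorem7:
  fixes m :: nat
  assumes "m \<ge> 1"
  shows "\<exists>\<epsilon>>0. \<forall>x :: nat \<Rightarrow> real. (\<forall>i<m. \<bar>x i\<bar> < \<epsilon>) \<longrightarrow>
           ((\<lambda>p. real_of_int (sa multipartite_adj (multipartite_verts m p)) *
                  (\<Prod>i<m. x i ^ p i / fact (p i)))
            has_sum ((1 - real m + (\<Sum>i<m. cosh (x i))) / cosh (\<Sum>i<m. x i)))
           {p :: nat \<Rightarrow> nat. \<forall>i\<ge>m. p i = 0}"
proof (intro exI[of _ "1 / (2 * real m)"] conjI allI impI)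
  show "0 < 1 / (2 * real m)" using assms by simp
  fix x :: "nat \<Rightarrow> real"
  assume hx: "\<forall>i<m. \<bar>x i\<bar> < 1 / (2 * real m)"
  have sA: "(\<lambda>p. ar m p * mon m x p) summable_on (PP m)"
    by (rule A_summable[OF assms]) (use hx in auto)
  have nA: "(\<lambda>p. norm (ar m p * mon m x p)) summable_on (PP m)"
    using summable_on_iff_abs_summable_on_real[THEN iffD1, OF sA] .
  define A where "A = infsum (\<lambda>p. ar m p * mon m x p) (PP m)"
  define C where "C = cosh (\<Sum>i<m. x i)"
  define D where "D = 1 - real m + (\<Sum>i<m. cosh (x i))"
  have h1: "((\<lambda>r. Dc m r * mon m x r) has_sum A * C) (PP m)"
    unfolding A_def C_def by (rule conv[OF nA])
  have h2: "((\<lambda>r. Dc m r * mon m x r) has_sum D) (PP m)"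
    unfolding D_def by (rule Dc_series)
  have AC: "A * C = D" using h1 h2 by (rule has_sum_unique)
  have Cpos: "C > 0" unfolding C_def by (rule cosh_real_pos)
  have AD: "A = D / C" using AC Cpos by (metis nonzero_mult_div_cancel_right less_irrefl)
  have hA: "((\<lambda>p. ar m p * mon m x p) has_sum A) (PP m)" using sA by (simp add: A_def)
  have eqf: "(\<lambda>p. real_of_int (sa multipartite_adj (multipartite_verts m p)) * (\<Prod>i<m. x i ^ p i / fact (p i)))
             = (\<lambda>p. ar m p * mon m x p)"
    unfolding ar_def av_def mon_def by (rule refl)
  have eqs: "{p :: nat \<Rightarrow> nat. \<forall>i\<ge>m. p i = 0} = PP m" by (simp add: PP_def)
  show "((\<lambda>p. real_of_int (sa multipartite_adj (multipartite_verts m p)) * (\<Prod>i<m. x i ^ p i / fact (p i)))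
            has_sum ((1 - real m + (\<Sum>i<m. cosh (x i))) / cosh (\<Sum>i<m. x i)))
           {p :: nat \<Rightarrow> nat. \<forall>i\<ge>m. p i = 0}"
    unfolding eqf eqs using hA unfolding AD C_def D_def .
qed

end
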